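(* Let $p$ be prime, $\mathbb{F}=\mathbb{F}_p$, $n\le N$, and let $\lambda=(\lambda_0,\lambda_1,\dots,\lambda_k)$ be an ordered partition of $[n]$ into pairwise disjoint, possibly empty sets. For $y_1,\dots,y_k\in\mathbb{F}^N$ let $P(x)=\mathcal{F}_{\lambda}(x,y_1,\dots,y_k)$. Then for every $z\in\mathbb{F}^N$, $$P_z(x)=\sum_{A\subseteq\lambda_0,\ A\ne\lambda_0}\mathcal{F}_{(A,\lambda_0\setminus A,\lambda_1,\dots,\lambda_k)}(x,z,y_1,\dots,y_k).$$
   Context: For an ordered partition $\mu=(\mu_0,\dots,\mu_k)$ of $[n]$ (blocks pairwise disjoint, possibly empty, union $[n]$) and vectors $r_0,\dots,r_k\in\mathbb{F}^N$, define $\mathcal{F}_{\mu}(r_0,\dots,r_k)=\sum_{1\le j_1<j_2<\dots<j_n\le N}\prod_{i=1}^n w_i(j_i)$, where $w_i=r_t$ for the unique $t$ with $i\in\mu_t$, and $r(j)$ denotes the $j$-th coordinate of $r$. The derivative is $P_z(x)=P(x+z)-P(x)$. *)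

theory Defs
  imports Main "HOL-Library.FuncSet" "HOL-Library.Cardinality" "HOL-Computational_Algebra.Primes"
begin

definition is_opart :: "nat \<Rightarrow> nat set list \<Rightarrow> bool" where
  "is_opart n mu \<longleftrightarrow>
     (\<forall>s<length mu. \<forall>t<length mu. s \<noteq> t \<longrightarrow> mu ! s \<inter> mu ! t = {}) \<and>
     \<Union> (set mu) = {1..n}"

definition blk_idx :: "nat set list \<Rightarrow> nat \<Rightarrow> nat" where
  "blk_idx mu i = (THE t. t < length mu \<and> i \<in> mu ! t)"

text \<open>F_mu(r_0,...,r_k) = sum over 1 <= j_1 < ... < j_n <= N of prod_i w_i(j_i),
  vectors in F^N being functions on coordinates 1..N.\<close>
definition Fmu :: "nat \<Rightarrow> nat \<Rightarrow> nat set list \<Rightarrow> (nat \<Rightarrow> 'a::comm_ring_1) list \<Rightarrow> 'a" where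
  "Fmu n N mu rs =
     (\<Sum>j \<in> {j \<in> {1..n} \<rightarrow>\<^sub>E {1..N}. strict_mono_on {1..n} j}.
        \<Prod>i\<in>{1..n}. (rs ! blk_idx mu i) (j i))"

end

theory Submission
  imports Defs
begin

lemma blk_idx_eq:
  assumes "\<forall>s<length mu. \<forall>t<length mu. s \<noteq> t \<longrightarrow> mu ! s \<inter> mu ! t = {}"
    and "t < length mu" and "i \<in> mu ! t"
  shows "blk_idx mu i = t"
  unfolding blk_idx_def
proof (rule the_equality)
  show "t < length mu \<and> i \<in> mu ! t" using assms by simp
next
  fix s assume "s < length mu \<and> i \<in> mu ! s"
  then show "s = t" using assms by blast
qed

lemma disj_new:
  assumes "\<forall>s<length (lam0 # lams). \<forall>t<length (lam0 # lams). s \<noteq> t \<longrightarrow> (lam0 # lams) ! s \<inter> (lam0 # lams) ! t = {}"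
    and "A \<subseteq> lam0"
  shows "\<forall>s<length (A # (lam0 - A) # lams). \<forall>t<length (A # (lam0 - A) # lams). s \<noteq> t \<longrightarrow>
     (A # (lam0 - A) # lams) ! s \<inter> (A # (lam0 - A) # lams) ! t = {}"
proof (intro allI impI)
  fix s t assume st: "s < length (A # (lam0 - A) # lams)" "t < length (A # (lam0 - A) # lams)" "s \<noteq> t"
  have L: "lams ! a \<inter> lam0 = {}" if "a < length lams" for a
    using assms(1)[rule_format, of "Suc a" 0] that by auto
  have L2: "lams ! a \<inter> lams ! b = {}" if "a < length lams" "b < length lams" "a \<noteq> b" for a b
    using assms(1)[rule_format, of "Suc a" "Suc b"] that by auto
  show "(A # (lam0 - A) # lams) ! s \<inter> (A # (lam0 - A) # lams) ! t = {}"
  proof (cases s)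
    case 0
    then show ?thesis using st L[of "t - 2"] assms(2)
      by (cases t; cases "t - 1") (auto simp: nth_Cons')
  next
    case (Suc s')
    then show ?thesis using st L[of "t - 2"] L[of "s - 2"] L2[of "s - 2" "t - 2"] assms(2)
      by (cases t; cases "t - 1"; cases s') (auto simp: nth_Cons')
  qed
qed

theorem lemma2p1:
  fixes n N k :: nat
    and lam0 :: "nat set" and lams :: "nat set list"
    and ys :: "(nat \<Rightarrow> 'a::{field,finite}) list"
    and x z :: "nat \<Rightarrow> 'a"
  assumes "prime CARD('a)"
    and "n \<le> N"
    and "length lams = k"
    and "is_opart n (lam0 # lams)"
    and "length ys = k"
  shows "Fmu n N (lam0 # lams) ((\<lambda>j. x j + z j) # ys) - Fmu n N (lam0 # lams) (x # ys)
       = (\<Sum>A \<in> {A. A \<subseteq> lam0 \<and> A \<noteq> lam0}. Fmu n N (A # (lam0 - A) # lams) (x # z # ys))"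
proof -
  define J where "J = {j \<in> {1..n} \<rightarrow>\<^sub>E {1..N}. strict_mono_on {1..n} j}"
  define R where "R = {1..n} - lam0"
  have disj: "\<forall>s<length (lam0 # lams). \<forall>t<length (lam0 # lams). s \<noteq> t \<longrightarrow> (lam0 # lams) ! s \<inter> (lam0 # lams) ! t = {}"
    and un: "\<Union> (set (lam0 # lams)) = {1..n}" using assms(4) unfolding is_opart_def by auto
  have l0: "lam0 \<subseteq> {1..n}" using un by auto
  have fin0: "finite lam0" using l0 finite_subset by blast
  have finR: "finite R" unfolding R_def by simp
  have split: "{1..n} = lam0 \<union> R" "lam0 \<inter> R = {}" using l0 unfolding R_def by auto
  define G where "G j = (\<Prod>i\<in>R. ((x # ys) ! blk_idx (lam0 # lams) i) (j i))" for j :: "nat \<Rightarrow> nat"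
  have inR: "\<exists>t<length lams. i \<in> lams ! t" if "i \<in> R" for i
  proof -
    have "i \<in> \<Union> (set lams)" using that un unfolding R_def by auto
    then show ?thesis by (auto simp: in_set_conv_nth)
  qed
  have b0: "blk_idx (lam0 # lams) i = 0" if "i \<in> lam0" for i
    using blk_idx_eq[OF disj, of 0 i] that by simp
  have Rval: "((r # ys) ! blk_idx (lam0 # lams) i) = ((x # ys) ! blk_idx (lam0 # lams) i)
     \<and> ((x # z # ys) ! blk_idx (A # (lam0 - A) # lams) i) = ((x # ys) ! blk_idx (lam0 # lams) i)"
    if iR: "i \<in> R" and AA: "A \<subseteq> lam0" for i r A
  proof -
    obtain t where t: "t < length lams" "i \<in> lams ! t" using inR[OF iR] by blast
    have "blk_idx (lam0 # lams) i = Suc t" using blk_idx_eq[OF disj, of "Suc t" i] t by simp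
    moreover have "blk_idx (A # (lam0 - A) # lams) i = Suc (Suc t)"
      using blk_idx_eq[OF disj_new[OF disj AA], of "Suc (Suc t)" i] t by simp
    ultimately show ?thesis by simp
  qed
  have F1: "Fmu n N (lam0 # lams) (r # ys) = (\<Sum>j\<in>J. (\<Prod>i\<in>lam0. r (j i)) * G j)" for r
    unfolding Fmu_def J_def[symmetric] G_def
  proof (rule sum.cong[OF refl])
    fix j
    have "(\<Prod>i\<in>{1..n}. ((r # ys) ! blk_idx (lam0 # lams) i) (j i))
      = (\<Prod>i\<in>lam0. ((r # ys) ! blk_idx (lam0 # lams) i) (j i)) * (\<Prod>i\<in>R. ((r # ys) ! blk_idx (lam0 # lams) i) (j i))"
      unfolding split(1) by (rule prod.union_disjoint[OF fin0 finR split(2)])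
    also have "\<dots> = (\<Prod>i\<in>lam0. r (j i)) * (\<Prod>i\<in>R. ((x # ys) ! blk_idx (lam0 # lams) i) (j i))"
      using b0 Rval[of _ lam0 r] by (intro arg_cong2[where f="(*)"] prod.cong) auto
    finally show "(\<Prod>i\<in>{1..n}. ((r # ys) ! blk_idx (lam0 # lams) i) (j i)) = (\<Prod>i\<in>lam0. r (j i)) * (\<Prod>i\<in>R. ((x # ys) ! blk_idx (lam0 # lams) i) (j i))" .
  qed
  have F2: "Fmu n N (A # (lam0 - A) # lams) (x # z # ys) = (\<Sum>j\<in>J. ((\<Prod>i\<in>A. x (j i)) * (\<Prod>i\<in>lam0 - A. z (j i))) * G j)"
    if A: "A \<subseteq> lam0" for A
    unfolding Fmu_def J_def[symmetric] G_def
  proof (rule sum.cong[OF refl])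
    fix j
    have dn: "\<forall>s<length (A # (lam0 - A) # lams). \<forall>t<length (A # (lam0 - A) # lams). s \<noteq> t \<longrightarrow>
     (A # (lam0 - A) # lams) ! s \<inter> (A # (lam0 - A) # lams) ! t = {}" by (rule disj_new[OF disj A])
    have bA: "blk_idx (A # (lam0 - A) # lams) i = 0" if "i \<in> A" for i
      using blk_idx_eq[OF dn, of 0 i] that by simp
    have bB: "blk_idx (A # (lam0 - A) # lams) i = 1" if "i \<in> lam0 - A" for i
      using blk_idx_eq[OF dn, of 1 i] that by simp
    have finA: "finite A" using A fin0 finite_subset by blast
    have "(\<Prod>i\<in>{1..n}. ((x # z # ys) ! blk_idx (A # (lam0 - A) # lams) i) (j i))
      = (\<Prod>i\<in>lam0. ((x # z # ys) ! blk_idx (A # (lam0 - A) # lams) i) (j i)) * (\<Prod>i\<in>R. ((x # z # ys) ! blk_idx (A # (lam0 - A) # lams) i) (j i))"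
      unfolding split(1) by (rule prod.union_disjoint[OF fin0 finR split(2)])
    also have "(\<Prod>i\<in>lam0. ((x # z # ys) ! blk_idx (A # (lam0 - A) # lams) i) (j i))
       = (\<Prod>i\<in>A. ((x # z # ys) ! blk_idx (A # (lam0 - A) # lams) i) (j i)) * (\<Prod>i\<in>lam0 - A. ((x # z # ys) ! blk_idx (A # (lam0 - A) # lams) i) (j i))"
      using prod.subset_diff[OF A fin0] by (simp add: mult.commute)
    also have "\<dots> = (\<Prod>i\<in>A. x (j i)) * (\<Prod>i\<in>lam0 - A. z (j i))"
      using bA bB by (intro arg_cong2[where f="(*)"] prod.cong) auto
    also have "(\<Prod>i\<in>R. ((x # z # ys) ! blk_idx (A # (lam0 - A) # lams) i) (j i)) = (\<Prod>i\<in>R. ((x # ys) ! blk_idx (lam0 # lams) i) (j i))"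
      using Rval[OF _ A, of _ x] by (intro prod.cong) auto
    finally show "(\<Prod>i\<in>{1..n}. ((x # z # ys) ! blk_idx (A # (lam0 - A) # lams) i) (j i)) = (\<Prod>i\<in>A. x (j i)) * (\<Prod>i\<in>lam0 - A. z (j i)) * (\<Prod>i\<in>R. ((x # ys) ! blk_idx (lam0 # lams) i) (j i))" .
  qed
  have setEq: "{A. A \<subseteq> lam0 \<and> A \<noteq> lam0} = Pow lam0 - {lam0}" by auto
  have finP: "finite (Pow lam0)" using fin0 by simp
  have "(\<Sum>A \<in> {A. A \<subseteq> lam0 \<and> A \<noteq> lam0}. Fmu n N (A # (lam0 - A) # lams) (x # z # ys))
      = (\<Sum>A \<in> Pow lam0 - {lam0}. \<Sum>j\<in>J. ((\<Prod>i\<in>A. x (j i)) * (\<Prod>i\<in>lam0 - A. z (j i))) * G j)"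
    unfolding setEq by (intro sum.cong) (auto simp: F2)
  also have "\<dots> = (\<Sum>A \<in> Pow lam0. \<Sum>j\<in>J. ((\<Prod>i\<in>A. x (j i)) * (\<Prod>i\<in>lam0 - A. z (j i))) * G j)
       - (\<Sum>j\<in>J. ((\<Prod>i\<in>lam0. x (j i)) * (\<Prod>i\<in>lam0 - lam0. z (j i))) * G j)"
    using sum_diff1[OF finP, of "\<lambda>A. \<Sum>j\<in>J. ((\<Prod>i\<in>A. x (j i)) * (\<Prod>i\<in>lam0 - A. z (j i))) * G j" lam0]
    by simp
  also have "(\<Sum>A \<in> Pow lam0. \<Sum>j\<in>J. ((\<Prod>i\<in>A. x (j i)) * (\<Prod>i\<in>lam0 - A. z (j i))) * G j)
     = (\<Sum>j\<in>J. (\<Prod>i\<in>lam0. x (j i) + z (j i)) * G j)"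
    by (subst sum.swap) (simp add: prod_add[OF fin0] sum_distrib_right)
  also have "(\<Sum>j\<in>J. ((\<Prod>i\<in>lam0. x (j i)) * (\<Prod>i\<in>lam0 - lam0. z (j i))) * G j) = (\<Sum>j\<in>J. (\<Prod>i\<in>lam0. x (j i)) * G j)"
    by simp
  finally show ?thesis using F1[of x] F1[of "\<lambda>j. x j + z j"] by simp
qed

end
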